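(* Let $M$ be a regular $po$-$\Gamma$-semigroup. Then every fuzzy right ideal and every fuzzy left ideal $f$ of $M$ is idempotent, i.e. $f\circ f=f$.
   Context: Let $M$ and $\Gamma$ be nonempty sets with a map $M\times\Gamma\times M\to M$, $(a,\gamma,b)\mapsto a\gamma b$, satisfying $(a\gamma b)\mu c=a\gamma(b\mu c)$ for all $a,b,c\in M$, $\gamma,\mu\in\Gamma$. A $po$-$\Gamma$-semigroup is such an $M$ with a partial order $\le$ such that $a\le b$ implies $a\gamma c\le b\gamma c$ and $c\gamma a\le c\gamma b$ for all $c\in M$, $\gamma\in\Gamma$. For $H\subseteq M$, $(H]=\{t\in M: t\le h \text{ for some } h\in H\}$; $a\Gamma M\Gamma a=\{a\gamma x\mu a: x\in M,\gamma,\mu\in\Gamma\}$. $M$ is regular if $a\in(a\Gamma M\Gamma a]$ for every $a\in M$. A fuzzy subset of $M$ is a map $M\to[0,1]$. For $a\in M$ let $A_a=\{(y,z)\in M\times M: a\le y\gamma z \text{ for some }\gamma\in\Gamma\}$. $(f\circ g)(a)=\bigvee_{(y,z)\in A_a}\min\{f(y),g(z)\}$ if $A_a\ne\emptyset$, and $0$ otherwise. A fuzzy right (resp. left) ideal is a fuzzy subset $f$ with $f(x\gamma y)\ge f(x)$ (resp. $f(x\gamma y)\ge f(y)$) for all $x,y\in M,\gamma\in\Gamma$, and $x\le y\Rightarrow f(x)\ge f(y)$. *)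

theory Defs
  imports Complex_Main
begin

text \<open>M is the type 'm with a partial order (class order); Gamma is the type 'g;
  the ternary operation is mult a \<gamma> b = a\<gamma>b.\<close>

definition po_gamma_semigroup :: "('m::order \<Rightarrow> 'g \<Rightarrow> 'm \<Rightarrow> 'm) \<Rightarrow> bool" where
  "po_gamma_semigroup mult \<longleftrightarrow>
     (\<forall>a b c \<gamma> \<mu>. mult (mult a \<gamma> b) \<mu> c = mult a \<gamma> (mult b \<mu> c)) \<and>
     (\<forall>a b c \<gamma>. a \<le> b \<longrightarrow> mult a \<gamma> c \<le> mult b \<gamma> c \<and> mult c \<gamma> a \<le> mult c \<gamma> b)"

definition down_closure :: "'m::order set \<Rightarrow> 'm set" where
  "down_closure H = {t. \<exists>h\<in>H. t \<le> h}"

definition regular_pgs :: "('m::order \<Rightarrow> 'g \<Rightarrow> 'm \<Rightarrow> 'm) \<Rightarrow> bool" where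
  "regular_pgs mult \<longleftrightarrow>
     (\<forall>a. a \<in> down_closure {mult (mult a \<gamma> x) \<mu> a | x \<gamma> \<mu>. True})"

definition A_set :: "('m::order \<Rightarrow> 'g \<Rightarrow> 'm \<Rightarrow> 'm) \<Rightarrow> 'm \<Rightarrow> ('m \<times> 'm) set" where
  "A_set mult a = {(y, z). \<exists>\<gamma>. a \<le> mult y \<gamma> z}"

definition fuzzy_subset :: "('m \<Rightarrow> real) \<Rightarrow> bool" where
  "fuzzy_subset f \<longleftrightarrow> (\<forall>x. 0 \<le> f x \<and> f x \<le> 1)"

definition fuzzy_comp :: "('m::order \<Rightarrow> 'g \<Rightarrow> 'm \<Rightarrow> 'm) \<Rightarrow> ('m \<Rightarrow> real) \<Rightarrow> ('m \<Rightarrow> real) \<Rightarrow> 'm \<Rightarrow> real" where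
  "fuzzy_comp mult f g a =
     (if A_set mult a \<noteq> {}
      then (SUP p\<in>A_set mult a. min (f (fst p)) (g (snd p)))
      else 0)"

definition fuzzy_right_ideal :: "('m::order \<Rightarrow> 'g \<Rightarrow> 'm \<Rightarrow> 'm) \<Rightarrow> ('m \<Rightarrow> real) \<Rightarrow> bool" where
  "fuzzy_right_ideal mult f \<longleftrightarrow> fuzzy_subset f \<and>
     (\<forall>x y \<gamma>. f (mult x \<gamma> y) \<ge> f x) \<and> (\<forall>x y. x \<le> y \<longrightarrow> f x \<ge> f y)"

definition fuzzy_left_ideal :: "('m::order \<Rightarrow> 'g \<Rightarrow> 'm \<Rightarrow> 'm) \<Rightarrow> ('m \<Rightarrow> real) \<Rightarrow> bool" where
  "fuzzy_left_ideal mult f \<longleftrightarrow> fuzzy_subset f \<and>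
     (\<forall>x y \<gamma>. f (mult x \<gamma> y) \<ge> f y) \<and> (\<forall>x y. x \<le> y \<longrightarrow> f x \<ge> f y)"

end

theory Submission
  imports Defs
begin

lemma sup_eq_helper:
  fixes g :: "'a \<Rightarrow> real"
  assumes "p \<in> S" "g p \<ge> c" "\<And>q. q \<in> S \<Longrightarrow> g q \<le> c"
  shows "(SUP q\<in>S. g q) = c"
proof (rule antisym)
  show "(SUP q\<in>S. g q) \<le> c" using assms by (intro cSUP_least) auto
  have "bdd_above (g ` S)" using assms(3) by (intro bdd_aboveI[where M=c]) auto
  hence "g p \<le> (SUP q\<in>S. g q)" using assms(1) by (rule cSUP_upper2) simp
  thus "c \<le> (SUP q\<in>S. g q)" using assms(2) by linarith
qed

theorem corollary31:
  fixes mult :: "'m::order \<Rightarrow> 'g \<Rightarrow> 'm \<Rightarrow> 'm"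
  assumes "po_gamma_semigroup mult"
    and "regular_pgs mult"
  shows "(\<forall>f. fuzzy_right_ideal mult f \<longrightarrow> fuzzy_comp mult f f = f) \<and>
         (\<forall>f. fuzzy_left_ideal mult f \<longrightarrow> fuzzy_comp mult f f = f)"
proof -
  have assoc: "\<And>a b c \<gamma> \<mu>. mult (mult a \<gamma> b) \<mu> c = mult a \<gamma> (mult b \<mu> c)"
    using assms(1) unfolding po_gamma_semigroup_def by blast
  have reg: "\<And>a. \<exists>x \<gamma> \<mu>. a \<le> mult (mult a \<gamma> x) \<mu> a"
    using assms(2) unfolding regular_pgs_def down_closure_def by blast
  show ?thesis
  proof (intro conjI allI impI ext)
    fix f a assume f: "fuzzy_right_ideal mult f"
    obtain x \<gamma> \<mu> where r: "a \<le> mult (mult a \<gamma> x) \<mu> a" using reg by blast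
    have p: "(mult a \<gamma> x, a) \<in> A_set mult a" using r unfolding A_set_def by blast
    have "(SUP q\<in>A_set mult a. min (f (fst q)) (f (snd q))) = f a"
    proof (rule sup_eq_helper[OF p])
      show "f a \<le> min (f (fst (mult a \<gamma> x, a))) (f (snd (mult a \<gamma> x, a)))"
        using f unfolding fuzzy_right_ideal_def by simp
      fix q assume "q \<in> A_set mult a"
      then obtain y z \<delta> where q: "q = (y, z)" "a \<le> mult y \<delta> z" unfolding A_set_def by blast
      have "f y \<le> f (mult y \<delta> z)" "f (mult y \<delta> z) \<le> f a" using f q(2) unfolding fuzzy_right_ideal_def by auto
      thus "min (f (fst q)) (f (snd q)) \<le> f a" using q by simp
    qed
    thus "fuzzy_comp mult f f a = f a" using p unfolding fuzzy_comp_def by auto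
  next
    fix f a assume f: "fuzzy_left_ideal mult f"
    obtain x \<gamma> \<mu> where r: "a \<le> mult (mult a \<gamma> x) \<mu> a" using reg by blast
    have p: "(a, mult x \<mu> a) \<in> A_set mult a" using r assoc unfolding A_set_def by auto
    have "(SUP q\<in>A_set mult a. min (f (fst q)) (f (snd q))) = f a"
    proof (rule sup_eq_helper[OF p])
      show "f a \<le> min (f (fst (a, mult x \<mu> a))) (f (snd (a, mult x \<mu> a)))"
        using f unfolding fuzzy_left_ideal_def by simp
      fix q assume "q \<in> A_set mult a"
      then obtain y z \<delta> where q: "q = (y, z)" "a \<le> mult y \<delta> z" unfolding A_set_def by blast
      have "f z \<le> f (mult y \<delta> z)" "f (mult y \<delta> z) \<le> f a" using f q(2) unfolding fuzzy_left_ideal_def by auto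
      thus "min (f (fst q)) (f (snd q)) \<le> f a" using q by simp
    qed
    thus "fuzzy_comp mult f f a = f a" using p unfolding fuzzy_comp_def by auto
  qed
qed

end
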